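(* Let $M$ be a principally Goldie*-lifting right $R$-module and $N$ a submodule of $M$. If $(N+D)/N$ is a direct summand of $M/N$ for every cyclic direct summand $D$ of $M$, then $M/N$ is principally Goldie*-lifting.
   Context: $R$ is an associative ring with identity; modules are unital right $R$-modules. $K\ll L$ means $K$ is small in $L$. For submodules $X,Y$ of a module $L$, $X\,\beta^*\,Y$ in $L$ means $(X+Y)/X\ll L/X$ and $(X+Y)/Y\ll L/Y$. A module $L$ is principally Goldie*-lifting if for every cyclic submodule $X$ of $L$ there is a direct summand $D$ of $L$ with $X\,\beta^*\,D$. *)

theory Defs
  imports Main
begin

text \<open>Unital right modules over an associative ring with identity (type class ring_1,
  not necessarily commutative), given as explicit structures so that quotient modules
  can be formed.\<close>

record ('r, 'm) rmod =
  carrier :: "'m set"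
  add :: "'m \<Rightarrow> 'm \<Rightarrow> 'm"
  zero :: "'m"
  smult :: "'m \<Rightarrow> 'r \<Rightarrow> 'm"

definition rmodule :: "('r::ring_1, 'm) rmod \<Rightarrow> bool" where
  "rmodule L \<longleftrightarrow>
     zero L \<in> carrier L \<and>
     (\<forall>x\<in>carrier L. \<forall>y\<in>carrier L. add L x y \<in> carrier L) \<and>
     (\<forall>x\<in>carrier L. \<forall>r. smult L x r \<in> carrier L) \<and>
     (\<forall>x\<in>carrier L. \<forall>y\<in>carrier L. \<forall>z\<in>carrier L. add L (add L x y) z = add L x (add L y z)) \<and>
     (\<forall>x\<in>carrier L. \<forall>y\<in>carrier L. add L x y = add L y x) \<and>
     (\<forall>x\<in>carrier L. add L (zero L) x = x) \<and>
     (\<forall>x\<in>carrier L. \<exists>y\<in>carrier L. add L x y = zero L) \<and>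
     (\<forall>x\<in>carrier L. \<forall>y\<in>carrier L. \<forall>r. smult L (add L x y) r = add L (smult L x r) (smult L y r)) \<and>
     (\<forall>x\<in>carrier L. \<forall>r s. smult L x (r + s) = add L (smult L x r) (smult L x s)) \<and>
     (\<forall>x\<in>carrier L. \<forall>r s. smult L x (r * s) = smult L (smult L x r) s) \<and>
     (\<forall>x\<in>carrier L. smult L x 1 = x)"

definition submodule :: "('r::ring_1, 'm) rmod \<Rightarrow> 'm set \<Rightarrow> bool" where
  "submodule L N \<longleftrightarrow> N \<subseteq> carrier L \<and> zero L \<in> N \<and>
     (\<forall>x\<in>N. \<forall>y\<in>N. add L x y \<in> N) \<and>
     (\<forall>x\<in>N. \<forall>r. smult L x r \<in> N) \<and>
     (\<forall>x\<in>N. \<exists>y\<in>N. add L x y = zero L)"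

definition msum :: "('r, 'm) rmod \<Rightarrow> 'm set \<Rightarrow> 'm set \<Rightarrow> 'm set" where
  "msum L X Y = {add L x y | x y. x \<in> X \<and> y \<in> Y}"

definition cyc :: "('r, 'm) rmod \<Rightarrow> 'm \<Rightarrow> 'm set" where
  "cyc L x = {smult L x r | r. True}"

definition cyclic_sub :: "('r::ring_1, 'm) rmod \<Rightarrow> 'm set \<Rightarrow> bool" where
  "cyclic_sub L X \<longleftrightarrow> (\<exists>x\<in>carrier L. X = cyc L x)"

definition direct_summand :: "('r::ring_1, 'm) rmod \<Rightarrow> 'm set \<Rightarrow> bool" where
  "direct_summand L D \<longleftrightarrow> submodule L D \<and>
     (\<exists>D'. submodule L D' \<and> msum L D D' = carrier L \<and> D \<inter> D' = {zero L})"

definition small :: "('r::ring_1, 'm) rmod \<Rightarrow> 'm set \<Rightarrow> bool" where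
  "small L K \<longleftrightarrow> submodule L K \<and>
     (\<forall>T. submodule L T \<and> msum L K T = carrier L \<longrightarrow> T = carrier L)"

definition coset :: "('r, 'm) rmod \<Rightarrow> 'm set \<Rightarrow> 'm \<Rightarrow> 'm set" where
  "coset L X x = {add L x n | n. n \<in> X}"

definition quot :: "('r, 'm) rmod \<Rightarrow> 'm set \<Rightarrow> ('r, 'm set) rmod" where
  "quot L X = \<lparr> carrier = coset L X ` carrier L,
               add = (\<lambda>A B. {add L a b | a b. a \<in> A \<and> b \<in> B}),
               zero = X,
               smult = (\<lambda>A r. {add L (smult L a r) n | a n. a \<in> A \<and> n \<in> X}) \<rparr>"

definition qimg :: "('r, 'm) rmod \<Rightarrow> 'm set \<Rightarrow> 'm set \<Rightarrow> 'm set set" where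
  "qimg L X S = coset L X ` S"

definition beta_star :: "('r::ring_1, 'm) rmod \<Rightarrow> 'm set \<Rightarrow> 'm set \<Rightarrow> bool" where
  "beta_star L X Y \<longleftrightarrow>
     small (quot L X) (qimg L X (msum L X Y)) \<and> small (quot L Y) (qimg L Y (msum L X Y))"

definition principally_goldie_star_lifting :: "('r::ring_1, 'm) rmod \<Rightarrow> bool" where
  "principally_goldie_star_lifting L \<longleftrightarrow>
     (\<forall>X. submodule L X \<and> cyclic_sub L X \<longrightarrow> (\<exists>D. direct_summand L D \<and> beta_star L X D))"

end

theory Submission
  imports Defs
begin

locale rm =
  fixes L :: "('r::ring_1, 'm) rmod"
  assumes rmod: "rmodule L"
begin

abbreviation C where "C \<equiv> carrier L"
abbreviation ad (infixl "\<oplus>" 65) where "ad \<equiv> add L"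
abbreviation z where "z \<equiv> zero L"
abbreviation sm (infixl "\<cdot>" 70) where "sm \<equiv> smult L"

lemma zero_c[simp]: "z \<in> C" using rmod unfolding rmodule_def by auto
lemma add_c[simp]: "x \<in> C \<Longrightarrow> y \<in> C \<Longrightarrow> x \<oplus> y \<in> C" using rmod unfolding rmodule_def by auto
lemma sm_c[simp]: "x \<in> C \<Longrightarrow> x \<cdot> r \<in> C" using rmod unfolding rmodule_def by auto
lemma assoc: "x \<in> C \<Longrightarrow> y \<in> C \<Longrightarrow> w \<in> C \<Longrightarrow> (x \<oplus> y) \<oplus> w = x \<oplus> (y \<oplus> w)"
  using rmod unfolding rmodule_def by auto
lemma comm: "x \<in> C \<Longrightarrow> y \<in> C \<Longrightarrow> x \<oplus> y = y \<oplus> x"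
  using rmod unfolding rmodule_def by auto
lemma lcomm: "x \<in> C \<Longrightarrow> y \<in> C \<Longrightarrow> w \<in> C \<Longrightarrow> x \<oplus> (y \<oplus> w) = y \<oplus> (x \<oplus> w)"
  by (metis assoc comm)
lemma zl[simp]: "x \<in> C \<Longrightarrow> z \<oplus> x = x" using rmod unfolding rmodule_def by auto
lemma zr[simp]: "x \<in> C \<Longrightarrow> x \<oplus> z = x" using comm zl zero_c by metis
lemma inv_ex: "x \<in> C \<Longrightarrow> \<exists>y\<in>C. x \<oplus> y = z" using rmod unfolding rmodule_def by (elim conjE) (rule bspec)
lemma d1: "x \<in> C \<Longrightarrow> y \<in> C \<Longrightarrow> (x \<oplus> y) \<cdot> r = x \<cdot> r \<oplus> y \<cdot> r"
  using rmod unfolding rmodule_def by auto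
lemma d2: "x \<in> C \<Longrightarrow> x \<cdot> (r + s) = x \<cdot> r \<oplus> x \<cdot> s"
  using rmod unfolding rmodule_def by auto
lemma smm: "x \<in> C \<Longrightarrow> x \<cdot> (r * s) = (x \<cdot> r) \<cdot> s"
  using rmod unfolding rmodule_def by auto
lemma sm1[simp]: "x \<in> C \<Longrightarrow> x \<cdot> 1 = x"
  using rmod unfolding rmodule_def by auto

lemmas ac = assoc comm lcomm

lemma cancel: assumes "x \<in> C" "y \<in> C" "w \<in> C" "x \<oplus> y = x \<oplus> w" shows "y = w"
proof -
  obtain u where u: "u \<in> C" "x \<oplus> u = z" using inv_ex assms by blast
  have "u \<oplus> (x \<oplus> y) = u \<oplus> (x \<oplus> w)" using assms by simp
  hence "(u \<oplus> x) \<oplus> y = (u \<oplus> x) \<oplus> w" using assms u by (simp add: assoc)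
  thus ?thesis using u assms by (simp add: comm)
qed

lemma sm0[simp]: assumes "x \<in> C" shows "x \<cdot> 0 = z"
proof -
  have "x \<cdot> 0 \<oplus> x \<cdot> 0 = x \<cdot> 0 \<oplus> z" using d2[OF assms, of 0 0] assms by simp
  thus ?thesis using cancel assms by (metis sm_c zero_c)
qed

definition neg where "neg x = x \<cdot> (-1)"
lemma neg_c[simp]: "x \<in> C \<Longrightarrow> neg x \<in> C" unfolding neg_def by simp
lemma neg_r[simp]: assumes "x \<in> C" shows "x \<oplus> neg x = z"
proof -
  have "x \<oplus> neg x = x \<cdot> (1 + -1)" using assms d2[OF assms, of 1 "-1"] by (simp add: neg_def)
  thus ?thesis using assms by simp
qed
lemma neg_l[simp]: "x \<in> C \<Longrightarrow> neg x \<oplus> x = z" using comm neg_r neg_c by metis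
lemma neg_cancel1[simp]: "x \<in> C \<Longrightarrow> y \<in> C \<Longrightarrow> x \<oplus> (neg x \<oplus> y) = y"
  by (simp flip: assoc)
lemma neg_cancel2[simp]: "x \<in> C \<Longrightarrow> y \<in> C \<Longrightarrow> neg x \<oplus> (x \<oplus> y) = y"
  by (simp flip: assoc)

lemma sub_c: "submodule L X \<Longrightarrow> X \<subseteq> C" unfolding submodule_def by blast
lemma sub_z: "submodule L X \<Longrightarrow> z \<in> X" unfolding submodule_def by blast
lemma sub_add: "submodule L X \<Longrightarrow> x \<in> X \<Longrightarrow> y \<in> X \<Longrightarrow> x \<oplus> y \<in> X" unfolding submodule_def by blast
lemma sub_sm: "submodule L X \<Longrightarrow> x \<in> X \<Longrightarrow> x \<cdot> r \<in> X" unfolding submodule_def by blast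
lemma sub_neg: "submodule L X \<Longrightarrow> x \<in> X \<Longrightarrow> neg x \<in> X" unfolding neg_def by (rule sub_sm)

lemma submoduleI:
  assumes "X \<subseteq> C" "z \<in> X" "\<And>x y. x \<in> X \<Longrightarrow> y \<in> X \<Longrightarrow> x \<oplus> y \<in> X"
    "\<And>x r. x \<in> X \<Longrightarrow> x \<cdot> r \<in> X"
  shows "submodule L X"
  unfolding submodule_def using assms neg_r unfolding neg_def by (metis subsetD)

lemma sub_carrier: "submodule L C" by (rule submoduleI) auto

end

section \<open>Cosets and quotients\<close>

context rm begin

abbreviation Q where "Q X \<equiv> quot L X"
abbreviation cs where "cs X \<equiv> coset L X"

lemma coset_c: "submodule L X \<Longrightarrow> x \<in> C \<Longrightarrow> cs X x \<subseteq> C"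
  unfolding coset_def using sub_c[of X] by auto

lemma in_coset: "submodule L X \<Longrightarrow> x \<in> C \<Longrightarrow> x \<in> cs X x"
  unfolding coset_def using sub_z zr by force

lemma coset_eq: assumes X: "submodule L X" and x: "x \<in> C" and y: "y \<in> cs X x"
  shows "cs X y = cs X x"
proof -
  obtain n where n: "n \<in> X" "y = x \<oplus> n" using y unfolding coset_def by auto
  have nC: "n \<in> C" using n X sub_c by auto
  show ?thesis
  proof
    show "cs X y \<subseteq> cs X x"
    proof
      fix w assume "w \<in> cs X y"
      then obtain m where m: "m \<in> X" "w = y \<oplus> m" unfolding coset_def by auto
      have "m \<in> C" using m X sub_c by auto
      hence "w = x \<oplus> (n \<oplus> m)" using m n nC x by (simp add: assoc)
      moreover have "n \<oplus> m \<in> X" using sub_add X n m by auto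
      ultimately show "w \<in> cs X x" unfolding coset_def by auto
    qed
  next
    show "cs X x \<subseteq> cs X y"
    proof
      fix w assume "w \<in> cs X x"
      then obtain m where m: "m \<in> X" "w = x \<oplus> m" unfolding coset_def by auto
      have "m \<in> C" using m X sub_c by auto
      hence "w = y \<oplus> (neg n \<oplus> m)" using m n nC x by (simp add: assoc)
      moreover have "neg n \<oplus> m \<in> X" using sub_add sub_neg X n m by auto
      ultimately show "w \<in> cs X y" unfolding coset_def by auto
    qed
  qed
qed

lemma coset_eq_iff: assumes X: "submodule L X" and x: "x \<in> C" and y: "y \<in> C"
  shows "cs X y = cs X x \<longleftrightarrow> y \<in> cs X x"
  using coset_eq[OF X x] in_coset[OF X y] by auto

lemma coset_add_mem: assumes X: "submodule L X" and x: "x \<in> C" and n: "n \<in> X"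
  shows "cs X (x \<oplus> n) = cs X x"
proof -
  have "x \<oplus> n \<in> cs X x" using n unfolding coset_def by auto
  thus ?thesis using coset_eq[OF X x] by blast
qed

lemma coset_mem_add: assumes X: "submodule L X" and x: "x \<in> C" and n: "n \<in> X"
  shows "cs X (n \<oplus> x) = cs X x"
  using coset_add_mem[OF assms] comm x n X sub_c by (metis subsetD)

lemma coset_zero: "submodule L X \<Longrightarrow> cs X z = X"
  unfolding coset_def using sub_c by force

lemma q_add: assumes X: "submodule L X" and x: "x \<in> C" and y: "y \<in> C"
  shows "add (Q X) (cs X x) (cs X y) = cs X (x \<oplus> y)"
proof -
  have "{a \<oplus> b |a b. a \<in> cs X x \<and> b \<in> cs X y} = cs X (x \<oplus> y)"
  proof
    show "{a \<oplus> b |a b. a \<in> cs X x \<and> b \<in> cs X y} \<subseteq> cs X (x \<oplus> y)"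
    proof clarify
      fix a b assume a: "a \<in> cs X x" and b: "b \<in> cs X y"
      obtain n where n: "n \<in> X" "a = x \<oplus> n" using a unfolding coset_def by auto
      obtain m where m: "m \<in> X" "b = y \<oplus> m" using b unfolding coset_def by auto
      have C: "n \<in> C" "m \<in> C" using n m X sub_c by auto
      have "a \<oplus> b = (x \<oplus> y) \<oplus> (n \<oplus> m)" using n m C x y by (simp add: ac)
      moreover have "n \<oplus> m \<in> X" using n m X sub_add by auto
      ultimately show "a \<oplus> b \<in> cs X (x \<oplus> y)" unfolding coset_def by auto
    qed
  next
    show "cs X (x \<oplus> y) \<subseteq> {a \<oplus> b |a b. a \<in> cs X x \<and> b \<in> cs X y}"
    proof
      fix w assume "w \<in> cs X (x \<oplus> y)"
      then obtain n where n: "n \<in> X" "w = (x \<oplus> y) \<oplus> n" unfolding coset_def by auto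
      have "n \<in> C" using n X sub_c by auto
      hence "w = x \<oplus> (y \<oplus> n)" using n x y by (simp add: assoc)
      moreover have "x \<in> cs X x" using in_coset X x by auto
      moreover have "y \<oplus> n \<in> cs X y" using n unfolding coset_def by auto
      ultimately show "w \<in> {a \<oplus> b |a b. a \<in> cs X x \<and> b \<in> cs X y}" by auto
    qed
  qed
  thus ?thesis unfolding quot_def by simp
qed

lemma q_sm: assumes X: "submodule L X" and x: "x \<in> C"
  shows "smult (Q X) (cs X x) r = cs X (x \<cdot> r)"
proof -
  have "{a \<cdot> r \<oplus> n |a n. a \<in> cs X x \<and> n \<in> X} = cs X (x \<cdot> r)"
  proof
    show "{a \<cdot> r \<oplus> n |a n. a \<in> cs X x \<and> n \<in> X} \<subseteq> cs X (x \<cdot> r)"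
    proof clarify
      fix a n assume a: "a \<in> cs X x" and n: "n \<in> X"
      obtain m where m: "m \<in> X" "a = x \<oplus> m" using a unfolding coset_def by auto
      have C: "n \<in> C" "m \<in> C" using n m X sub_c by auto
      have "a \<cdot> r \<oplus> n = x \<cdot> r \<oplus> (m \<cdot> r \<oplus> n)" using m C x by (simp add: d1 assoc)
      moreover have "m \<cdot> r \<oplus> n \<in> X" using n m X sub_add sub_sm by auto
      ultimately show "a \<cdot> r \<oplus> n \<in> cs X (x \<cdot> r)" unfolding coset_def by auto
    qed
  next
    show "cs X (x \<cdot> r) \<subseteq> {a \<cdot> r \<oplus> n |a n. a \<in> cs X x \<and> n \<in> X}"
      using in_coset[OF X x] unfolding coset_def by auto
  qed
  thus ?thesis unfolding quot_def by simp
qed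

lemma q_carrier: "carrier (Q X) = cs X ` C" unfolding quot_def by simp
lemma q_zero: "zero (Q X) = X" unfolding quot_def by simp

lemma rmodule_quot: assumes X: "submodule L X" shows "rmodule (Q X)"
proof -
  note qa = q_add[OF X] and qs = q_sm[OF X]
  have Z: "X = cs X z" using coset_zero[OF X] by simp
  show ?thesis
  unfolding rmodule_def q_carrier q_zero
  proof (intro conjI ballI allI)
    show "X \<in> cs X ` C" using Z by auto
  next
    fix A B assume "A \<in> cs X ` C" "B \<in> cs X ` C"
    thus "add (Q X) A B \<in> cs X ` C" by (auto simp: qa)
  next
    fix A r assume "A \<in> cs X ` C"
    thus "smult (Q X) A r \<in> cs X ` C" by (auto simp: qs)
  next
    fix A B D assume "A \<in> cs X ` C" "B \<in> cs X ` C" "D \<in> cs X ` C"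
    thus "add (Q X) (add (Q X) A B) D = add (Q X) A (add (Q X) B D)" by (auto simp: qa assoc)
  next
    fix A B assume "A \<in> cs X ` C" "B \<in> cs X ` C"
    thus "add (Q X) A B = add (Q X) B A" by (auto simp: qa comm)
  next
    fix A assume "A \<in> cs X ` C"
    then obtain a where a: "a \<in> C" "A = cs X a" by auto
    show "add (Q X) X A = A" using a Z qa by (metis zero_c zl)
    show "\<exists>B\<in>cs X ` C. add (Q X) A B = X"
      using a Z qa by (intro bexI[of _ "cs X (neg a)"]) auto
  next
    fix A B r assume "A \<in> cs X ` C" "B \<in> cs X ` C"
    thus "smult (Q X) (add (Q X) A B) r = add (Q X) (smult (Q X) A r) (smult (Q X) B r)"
      by (auto simp: qa qs d1)
  next
    fix A r s assume "A \<in> cs X ` C"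
    thus "smult (Q X) A (r + s) = add (Q X) (smult (Q X) A r) (smult (Q X) A s)"
      by (auto simp: qa qs d2)
  next
    fix A r s assume "A \<in> cs X ` C"
    thus "smult (Q X) A (r * s) = smult (Q X) (smult (Q X) A r) s"
      by (auto simp: qs smm)
  next
    fix A assume "A \<in> cs X ` C"
    thus "smult (Q X) A 1 = A" by (auto simp: qs)
  qed
qed
end


context rm begin

lemma coset_rep: assumes X: "submodule L X" and A: "A \<in> cs X ` C" and a: "a \<in> A"
  shows "a \<in> C \<and> A = cs X a"
proof -
  obtain b where b: "b \<in> C" "A = cs X b" using A by auto
  thus ?thesis using coset_eq[OF X b(1)] a coset_c[OF X b(1)] by auto
qed

lemma union_qimg: assumes X: "submodule L X" and T: "submodule L T" and XT: "X \<subseteq> T"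
  shows "\<Union> (qimg L X T) = T"
proof
  show "\<Union> (qimg L X T) \<subseteq> T"
  proof
    fix w assume "w \<in> \<Union> (qimg L X T)"
    then obtain t where t: "t \<in> T" "w \<in> cs X t" unfolding qimg_def by auto
    then obtain n where "n \<in> X" "w = t \<oplus> n" unfolding coset_def by auto
    thus "w \<in> T" using t XT sub_add[OF T] by auto
  qed
next
  show "T \<subseteq> \<Union> (qimg L X T)"
    using in_coset[OF X] sub_c[OF T] unfolding qimg_def by blast
qed

lemma qimg_sub: assumes X: "submodule L X" and T: "submodule L T" and XT: "X \<subseteq> T"
  shows "submodule (Q X) (qimg L X T)"
proof -
  have TC: "T \<subseteq> C" using sub_c[OF T] .
  show ?thesis unfolding submodule_def q_carrier q_zero qimg_def
  proof (intro conjI ballI allI)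
    show "cs X ` T \<subseteq> cs X ` C" using TC by auto
    show "X \<in> cs X ` T" using coset_zero[OF X] sub_z[OF T] by (metis image_eqI)
  next
    fix A B assume "A \<in> cs X ` T" "B \<in> cs X ` T"
    then obtain a b where "a \<in> T" "b \<in> T" "A = cs X a" "B = cs X b" by auto
    moreover have "add (Q X) (cs X a) (cs X b) = cs X (a \<oplus> b)" using q_add[OF X] TC \<open>a \<in> T\<close> \<open>b \<in> T\<close> by auto
    ultimately show "add (Q X) A B \<in> cs X ` T" using sub_add[OF T] by auto
  next
    fix A r assume "A \<in> cs X ` T"
    then obtain a where "a \<in> T" "A = cs X a" by auto
    moreover have "smult (Q X) (cs X a) r = cs X (a \<cdot> r)" using q_sm[OF X] TC \<open>a \<in> T\<close> by auto
    ultimately show "smult (Q X) A r \<in> cs X ` T" using sub_sm[OF T] by auto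
  next
    fix A assume "A \<in> cs X ` T"
    then obtain a where a: "a \<in> T" "A = cs X a" by auto
    have "a \<in> C" using a TC by auto
    hence "add (Q X) A (cs X (neg a)) = X" using a q_add[OF X] coset_zero[OF X] by auto
    thus "\<exists>B\<in>cs X ` T. add (Q X) A B = X" using a sub_neg[OF T] by auto
  qed
qed

lemma quot_sub_corr: assumes X: "submodule L X" and S: "submodule (Q X) \<T>"
  shows "submodule L (\<Union>\<T>) \<and> X \<subseteq> \<Union>\<T> \<and> \<T> = qimg L X (\<Union>\<T>)"
proof -
  have S1: "\<T> \<subseteq> cs X ` C" and S2: "X \<in> \<T>"
    and S3: "\<And>A B. A \<in> \<T> \<Longrightarrow> B \<in> \<T> \<Longrightarrow> add (Q X) A B \<in> \<T>"
    and S4: "\<And>A r. A \<in> \<T> \<Longrightarrow> smult (Q X) A r \<in> \<T>"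
    using S unfolding submodule_def q_carrier q_zero by auto
  have rep: "\<And>A a. A \<in> \<T> \<Longrightarrow> a \<in> A \<Longrightarrow> a \<in> C \<and> A = cs X a"
    using coset_rep[OF X] S1 by blast
  have sub: "submodule L (\<Union>\<T>)"
  proof (rule submoduleI)
    show "\<Union>\<T> \<subseteq> C" using rep by blast
    show "z \<in> \<Union>\<T>" using S2 sub_z[OF X] by auto
  next
    fix a b assume "a \<in> \<Union>\<T>" "b \<in> \<Union>\<T>"
    then obtain A B where AB: "A \<in> \<T>" "B \<in> \<T>" "a \<in> A" "b \<in> B" by auto
    hence "add (Q X) A B = cs X (a \<oplus> b)" using rep q_add[OF X] by metis
    moreover have "a \<oplus> b \<in> cs X (a \<oplus> b)" using in_coset[OF X] rep AB by simp
    ultimately show "a \<oplus> b \<in> \<Union>\<T>" using S3[OF AB(1,2)] by auto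
  next
    fix a r assume "a \<in> \<Union>\<T>"
    then obtain A where AB: "A \<in> \<T>" "a \<in> A" by auto
    hence "smult (Q X) A r = cs X (a \<cdot> r)" using rep q_sm[OF X] by metis
    moreover have "a \<cdot> r \<in> cs X (a \<cdot> r)" using in_coset[OF X] rep AB by simp
    ultimately show "a \<cdot> r \<in> \<Union>\<T>" using S4[OF AB(1)] by auto
  qed
  have eq: "\<T> = qimg L X (\<Union>\<T>)"
  proof
    show "\<T> \<subseteq> qimg L X (\<Union>\<T>)"
    proof
      fix A assume A: "A \<in> \<T>"
      then obtain a where "a \<in> C" "A = cs X a" using S1 by auto
      hence "a \<in> A" "A = cs X a" using in_coset[OF X] by auto
      thus "A \<in> qimg L X (\<Union>\<T>)" using A unfolding qimg_def by auto
    qed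
  next
    show "qimg L X (\<Union>\<T>) \<subseteq> \<T>" unfolding qimg_def using rep by auto
  qed
  show ?thesis using sub eq S2 by auto
qed

lemma msum_qimg: assumes X: "submodule L X" and S: "S \<subseteq> C" and T: "T \<subseteq> C"
  shows "msum (Q X) (qimg L X S) (qimg L X T) = qimg L X (msum L S T)"
proof
  show "msum (Q X) (qimg L X S) (qimg L X T) \<subseteq> qimg L X (msum L S T)"
  proof
    fix W assume "W \<in> msum (Q X) (qimg L X S) (qimg L X T)"
    then obtain a b where ab: "a \<in> S" "b \<in> T" "W = add (Q X) (cs X a) (cs X b)"
      unfolding msum_def qimg_def by auto
    hence "W = cs X (a \<oplus> b)" using q_add[OF X] S T by auto
    moreover have "a \<oplus> b \<in> msum L S T" using ab unfolding msum_def by auto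
    ultimately show "W \<in> qimg L X (msum L S T)" unfolding qimg_def by auto
  qed
next
  show "qimg L X (msum L S T) \<subseteq> msum (Q X) (qimg L X S) (qimg L X T)"
  proof
    fix W assume "W \<in> qimg L X (msum L S T)"
    then obtain a b where ab: "a \<in> S" "b \<in> T" "W = cs X (a \<oplus> b)"
      unfolding msum_def qimg_def by auto
    hence "W = add (Q X) (cs X a) (cs X b)" using q_add[OF X] S T by auto
    moreover have "cs X a \<in> qimg L X S" "cs X b \<in> qimg L X T" using ab unfolding qimg_def by auto
    ultimately show "W \<in> msum (Q X) (qimg L X S) (qimg L X T)" unfolding msum_def by auto
  qed
qed

lemma qimg_inj: assumes X: "submodule L X" and S: "submodule L S" "X \<subseteq> S"
  and T: "submodule L T" "X \<subseteq> T" and e: "qimg L X S = qimg L X T"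
  shows "S = T"
proof -
  have "S = \<Union> (qimg L X S)" using union_qimg[OF X S] by simp
  also have "\<dots> = \<Union> (qimg L X T)" using e by simp
  also have "\<dots> = T" using union_qimg[OF X T] by simp
  finally show ?thesis .
qed

lemma msum_sub: assumes S: "submodule L S" and T: "submodule L T"
  shows "submodule L (msum L S T)"
proof (rule submoduleI)
  show "msum L S T \<subseteq> C" unfolding msum_def using sub_c[OF S] sub_c[OF T] add_c by blast
  have "z = z \<oplus> z" by simp
  thus "z \<in> msum L S T" unfolding msum_def using sub_z[OF S] sub_z[OF T] by blast
next
  fix x y assume "x \<in> msum L S T" "y \<in> msum L S T"
  then obtain a b c d where abcd: "a \<in> S" "b \<in> T" "c \<in> S" "d \<in> T" "x = a \<oplus> b" "y = c \<oplus> d"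
    unfolding msum_def by auto
  moreover have "a \<in> C" "b \<in> C" "c \<in> C" "d \<in> C" using abcd sub_c[OF S] sub_c[OF T] by auto
  ultimately have "x \<oplus> y = (a \<oplus> c) \<oplus> (b \<oplus> d)" by (simp add: ac)
  thus "x \<oplus> y \<in> msum L S T" unfolding msum_def using abcd sub_add[OF S] sub_add[OF T] by blast
next
  fix x r assume "x \<in> msum L S T"
  then obtain a b where ab: "a \<in> S" "b \<in> T" "x = a \<oplus> b" unfolding msum_def by auto
  moreover have "a \<in> C" "b \<in> C" using ab sub_c[OF S] sub_c[OF T] by auto
  ultimately have "x \<cdot> r = a \<cdot> r \<oplus> b \<cdot> r" using d1 by auto
  thus "x \<cdot> r \<in> msum L S T" unfolding msum_def using ab sub_sm[OF S] sub_sm[OF T] by blast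
qed

lemma msum_l: assumes "submodule L T" "S \<subseteq> C" shows "S \<subseteq> msum L S T"
proof
  fix x assume "x \<in> S"
  hence "x = x \<oplus> z" "x \<in> S" "z \<in> T" using assms sub_z by auto
  thus "x \<in> msum L S T" unfolding msum_def by blast
qed
lemma msum_r: assumes "submodule L S" "T \<subseteq> C" shows "T \<subseteq> msum L S T"
proof
  fix x assume "x \<in> T"
  hence "x = z \<oplus> x" "x \<in> T" "z \<in> S" using assms sub_z by auto
  thus "x \<in> msum L S T" unfolding msum_def by blast
qed
lemma msum_mono: "S \<subseteq> S' \<Longrightarrow> T \<subseteq> T' \<Longrightarrow> msum L S T \<subseteq> msum L S' T'"
  unfolding msum_def by blast

lemma small_quot: assumes X: "submodule L X" and S: "submodule L S" and XS: "X \<subseteq> S"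
  shows "small (Q X) (qimg L X S) \<longleftrightarrow>
    (\<forall>T. submodule L T \<and> X \<subseteq> T \<and> msum L S T = C \<longrightarrow> T = C)"
proof -
  have QC: "carrier (Q X) = qimg L X C" unfolding q_carrier qimg_def ..
  have SC: "S \<subseteq> C" using sub_c[OF S] .
  have XC: "X \<subseteq> C" using sub_c[OF X] .
  show ?thesis
  proof
    assume sm: "small (Q X) (qimg L X S)"
    show "\<forall>T. submodule L T \<and> X \<subseteq> T \<and> msum L S T = C \<longrightarrow> T = C"
    proof clarify
      fix T assume T: "submodule L T" "X \<subseteq> T" "msum L S T = C"
      have "msum (Q X) (qimg L X S) (qimg L X T) = carrier (Q X)"
        using msum_qimg[OF X SC sub_c[OF T(1)]] T QC by simp
      hence "qimg L X T = carrier (Q X)"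
        using sm qimg_sub[OF X T(1,2)] unfolding small_def by blast
      thus "T = C" using qimg_inj[OF X T(1,2) sub_carrier XC] QC by simp
    qed
  next
    assume H: "\<forall>T. submodule L T \<and> X \<subseteq> T \<and> msum L S T = C \<longrightarrow> T = C"
    show "small (Q X) (qimg L X S)" unfolding small_def
    proof (intro conjI allI impI)
      show "submodule (Q X) (qimg L X S)" using qimg_sub[OF X S XS] .
    next
      fix \<T> assume A: "submodule (Q X) \<T> \<and> msum (Q X) (qimg L X S) \<T> = carrier (Q X)"
      note c = quot_sub_corr[OF X, of \<T>]
      let ?T = "\<Union>\<T>"
      have T: "submodule L ?T" "X \<subseteq> ?T" "\<T> = qimg L X ?T" using c A by auto
      have "qimg L X (msum L S ?T) = qimg L X C"
        using A msum_qimg[OF X SC sub_c[OF T(1)]] T(3) QC by simp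
      hence "msum L S ?T = C"
        using qimg_inj[OF X msum_sub[OF S T(1)] _ sub_carrier XC] XS msum_l[OF T(1) SC] by blast
      hence "?T = C" using H T by blast
      thus "\<T> = carrier (Q X)" using T(3) QC by simp
    qed
  qed
qed

end


context rm begin

lemma cyc_sub: assumes x: "x \<in> C" shows "submodule L (cyc L x)"
proof (rule submoduleI)
  show "cyc L x \<subseteq> C" unfolding cyc_def using x by auto
  show "z \<in> cyc L x" unfolding cyc_def using sm0[OF x] by (metis (mono_tags, lifting) mem_Collect_eq)
next
  fix a b assume "a \<in> cyc L x" "b \<in> cyc L x"
  then obtain r s where "a = x \<cdot> r" "b = x \<cdot> s" unfolding cyc_def by auto
  hence "a \<oplus> b = x \<cdot> (r + s)" using d2 x by simp
  thus "a \<oplus> b \<in> cyc L x" unfolding cyc_def by auto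
next
  fix a r assume "a \<in> cyc L x"
  then obtain s where "a = x \<cdot> s" unfolding cyc_def by auto
  hence "a \<cdot> r = x \<cdot> (s * r)" using smm x by simp
  thus "a \<cdot> r \<in> cyc L x" unfolding cyc_def by auto
qed

lemma qimg_cyc: assumes X: "submodule L X" and x: "x \<in> C"
  shows "cyc (Q X) (cs X x) = qimg L X (cyc L x)"
  unfolding cyc_def qimg_def using q_sm[OF X x] by auto

lemma qimg_msum: assumes X: "submodule L X" and S: "S \<subseteq> C"
  shows "qimg L X (msum L X S) = qimg L X S"
proof
  show "qimg L X (msum L X S) \<subseteq> qimg L X S"
  proof
    fix W assume "W \<in> qimg L X (msum L X S)"
    then obtain n s where "n \<in> X" "s \<in> S" "W = cs X (n \<oplus> s)" unfolding qimg_def msum_def by auto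
    thus "W \<in> qimg L X S" using coset_mem_add[OF X] S unfolding qimg_def by auto
  qed
next
  show "qimg L X S \<subseteq> qimg L X (msum L X S)"
    using msum_l[OF _ sub_c[OF X]] msum_r[OF X S] unfolding qimg_def by (metis image_mono)
qed

lemma msum_comm: assumes "S \<subseteq> C" "T \<subseteq> C" shows "msum L S T = msum L T S"
  unfolding msum_def using assms comm by blast

lemma rearr: assumes N: "submodule L N" and K: "K \<subseteq> C" and D: "D \<subseteq> C"
  and T: "submodule L T" and NT: "N \<subseteq> T"
  shows "msum L (msum L (msum L N K) (msum L N D)) T \<subseteq> msum L (msum L K D) T"
proof
  fix w assume "w \<in> msum L (msum L (msum L N K) (msum L N D)) T"
  then obtain n1 k n2 d t where e: "n1 \<in> N" "k \<in> K" "n2 \<in> N" "d \<in> D" "t \<in> T"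
    "w = ((n1 \<oplus> k) \<oplus> (n2 \<oplus> d)) \<oplus> t" unfolding msum_def by blast
  have c: "n1 \<in> C" "k \<in> C" "n2 \<in> C" "d \<in> C" "t \<in> C"
    using e K D sub_c[OF N] sub_c[OF T] NT by auto
  have "w = (k \<oplus> d) \<oplus> ((n1 \<oplus> n2) \<oplus> t)" using e(6) c by (simp add: ac)
  moreover have "(n1 \<oplus> n2) \<oplus> t \<in> T" using e NT sub_add[OF T] by (meson subsetD)
  moreover have "k \<oplus> d \<in> msum L K D" using e unfolding msum_def by auto
  ultimately show "w \<in> msum L (msum L K D) T" unfolding msum_def by auto
qed

end

lemma main_part:
  fixes M :: "('r::ring_1, 'm) rmod" and N :: "'m set"
  assumes M: "rmodule M" and N: "submodule M N"
    and S1: "submodule M S1" "N \<subseteq> S1" and S2: "submodule M S2" "N \<subseteq> S2"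
    and H: "\<And>T. submodule M T \<Longrightarrow> N \<subseteq> T \<Longrightarrow> S1 \<subseteq> T \<Longrightarrow>
                msum M (msum M S1 S2) T = carrier M \<Longrightarrow> T = carrier M"
  shows "small (quot (quot M N) (qimg M N S1))
           (qimg (quot M N) (qimg M N S1) (qimg M N (msum M S1 S2)))"
proof -
  interpret A: rm M by (rule rm.intro[OF M])
  interpret B: rm "quot M N" by (rule rm.intro[OF A.rmodule_quot[OF N]])
  have S12: "submodule M (msum M S1 S2)" using A.msum_sub[OF S1(1) S2(1)] .
  have S1S12: "S1 \<subseteq> msum M S1 S2" using A.msum_l[OF S2(1) A.sub_c[OF S1(1)]] .
  have QC: "carrier (quot M N) = qimg M N (carrier M)" unfolding A.q_carrier qimg_def ..
  have X: "submodule (quot M N) (qimg M N S1)" using A.qimg_sub[OF N S1] .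
  have S: "submodule (quot M N) (qimg M N (msum M S1 S2))"
    using A.qimg_sub[OF N S12] S1(2) S1S12 by auto
  have XS: "qimg M N S1 \<subseteq> qimg M N (msum M S1 S2)" using S1S12 unfolding qimg_def by auto
  show ?thesis unfolding B.small_quot[OF X S XS]
  proof clarify
    fix \<T> assume T: "submodule (quot M N) \<T>" "qimg M N S1 \<subseteq> \<T>"
      "msum (quot M N) (qimg M N (msum M S1 S2)) \<T> = carrier (quot M N)"
    let ?T = "\<Union>\<T>"
    have c: "submodule M ?T" "N \<subseteq> ?T" "\<T> = qimg M N ?T" using A.quot_sub_corr[OF N T(1)] by auto
    have "S1 = \<Union>(qimg M N S1)" using A.union_qimg[OF N S1] by simp
    also have "\<dots> \<subseteq> ?T" using T(2) by auto
    finally have S1T: "S1 \<subseteq> ?T" .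
    have "qimg M N (msum M (msum M S1 S2) ?T) = qimg M N (carrier M)"
      using T(3) c(3) QC A.msum_qimg[OF N A.sub_c[OF S12] A.sub_c[OF c(1)]] by simp
    moreover have "N \<subseteq> msum M (msum M S1 S2) ?T"
      using A.msum_l[OF c(1) A.sub_c[OF S12]] S1S12 S1(2) by auto
    ultimately have "msum M (msum M S1 S2) ?T = carrier M"
      using A.qimg_inj[OF N A.msum_sub[OF S12 c(1)] _ A.sub_carrier A.sub_c[OF N]] by blast
    hence "?T = carrier M" using H c S1T by blast
    thus "\<T> = carrier (quot M N)" using c(3) QC by simp
  qed
qed

theorem proposition3p10:
  fixes M :: "('r::ring_1, 'm) rmod" and N :: "'m set"
  assumes "rmodule M"
    and "principally_goldie_star_lifting M"
    and "submodule M N"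
    and "\<forall>D. direct_summand M D \<and> cyclic_sub M D \<longrightarrow>
            direct_summand (quot M N) (qimg M N (msum M N D))"
  shows "principally_goldie_star_lifting (quot M N)"
  unfolding principally_goldie_star_lifting_def
proof clarify
  interpret A: rm M by (rule rm.intro[OF assms(1)])
  note N = assms(3)
  fix \<X> assume X: "submodule (quot M N) \<X>" "cyclic_sub (quot M N) \<X>"
  then obtain x where x: "x \<in> carrier M" "\<X> = cyc (quot M N) (coset M N x)"
    unfolding cyclic_sub_def A.q_carrier by auto
  define K where "K = cyc M x"
  have K: "submodule M K" "cyclic_sub M K" using A.cyc_sub[OF x(1)] x(1)
    unfolding K_def cyclic_sub_def by auto
  have KC: "K \<subseteq> carrier M" using A.sub_c[OF K(1)] .
  obtain D where D: "direct_summand M D" "beta_star M K D"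
    using assms(2) K unfolding principally_goldie_star_lifting_def by blast
  obtain D' where D': "submodule M D" "submodule M D'" "msum M D D' = carrier M" "D \<inter> D' = {zero M}"
    using D(1) unfolding direct_summand_def by auto
  have DC: "D \<subseteq> carrier M" "D' \<subseteq> carrier M" using A.sub_c D' by auto
  have KD: "submodule M (msum M K D)" "K \<subseteq> msum M K D" "D \<subseteq> msum M K D"
    using A.msum_sub[OF K(1) D'(1)] A.msum_l[OF D'(1) KC] A.msum_r[OF K(1) DC(1)] by auto
  have sm1: "small (quot M K) (qimg M K (msum M K D))" and
       sm2: "small (quot M D) (qimg M D (msum M K D))" using D(2) unfolding beta_star_def by auto
  note H1 = sm1[unfolded A.small_quot[OF K(1) KD(1) KD(2)]]
  have sm2': "small (quot M D) (qimg M D (msum M D K))"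
    using sm2 A.msum_comm[OF KC DC(1)] by simp
  have DK: "submodule M (msum M D K)" "D \<subseteq> msum M D K"
    using A.msum_sub[OF D'(1) K(1)] A.msum_l[OF K(1) DC(1)] by auto
  note H2 = sm2'[unfolded A.small_quot[OF D'(1) DK]]
  have KD'C: "msum M K D' = carrier M"
  proof -
    have "carrier M = msum M D D'" using D' by simp
    also have "\<dots> \<subseteq> msum M (msum M K D) (msum M K D')"
      using A.msum_mono KD(3) A.msum_r[OF K(1) DC(2)] by blast
    finally have "msum M (msum M K D) (msum M K D') = carrier M"
      using A.sub_c[OF A.msum_sub[OF KD(1) A.msum_sub[OF K(1) D'(2)]]] by auto
    thus ?thesis using H1 A.msum_sub[OF K(1) D'(2)] A.msum_l[OF D'(2) KC] by blast
  qed
  obtain d d' where dd: "d \<in> D" "d' \<in> D'" "x = add M d d'"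
  proof -
    have "x \<in> msum M D D'" using D'(3) x(1) by simp
    thus ?thesis using that unfolding msum_def by blast
  qed
  have dC: "d \<in> carrier M" "d' \<in> carrier M" using dd DC by auto
  have Dcyc: "D = cyc M d"
  proof
    show "cyc M d \<subseteq> D" unfolding cyc_def using A.sub_sm[OF D'(1) dd(1)] by auto
  next
    show "D \<subseteq> cyc M d"
    proof
      fix e assume e: "e \<in> D"
      then obtain r w where rw: "w \<in> D'" "e = add M (smult M x r) w"
        using KD'C DC(1) unfolding msum_def K_def cyc_def by blast
      have wC: "w \<in> carrier M" using rw DC by auto
      let ?v = "add M (smult M d' r) w"
      have ev: "e = add M (smult M d r) ?v" using rw dd(3) dC wC by (simp add: A.d1 A.assoc)
      have vC: "?v \<in> carrier M" using dC wC by simp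
      have "?v = add M (A.neg (smult M d r)) e" using ev dC vC by simp
      moreover have "add M (A.neg (smult M d r)) e \<in> D"
        using A.sub_add[OF D'(1)] A.sub_neg[OF D'(1)] A.sub_sm[OF D'(1) dd(1)] e by blast
      moreover have "?v \<in> D'" using A.sub_add[OF D'(2)] A.sub_sm[OF D'(2) dd(2)] rw(1) by blast
      ultimately have "?v = zero M" using D'(4) by auto
      hence "e = smult M d r" using ev dC by simp
      thus "e \<in> cyc M d" unfolding cyc_def by auto
    qed
  qed
  have Dcs: "cyclic_sub M D" unfolding cyclic_sub_def using Dcyc dC by auto
  define S1 where "S1 = msum M N K"
  define S2 where "S2 = msum M N D"
  define E where "E = qimg M N S2"
  have E: "direct_summand (quot M N) E" using assms(4) D(1) Dcs unfolding E_def S2_def by blast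
  have NC: "N \<subseteq> carrier M" using A.sub_c[OF N] .
  have S1s: "submodule M S1" "N \<subseteq> S1" "K \<subseteq> S1"
    unfolding S1_def using A.msum_sub[OF N K(1)] A.msum_l[OF K(1) NC] A.msum_r[OF N KC] by auto
  have S2s: "submodule M S2" "N \<subseteq> S2" "D \<subseteq> S2"
    unfolding S2_def using A.msum_sub[OF N D'(1)] A.msum_l[OF D'(1) NC] A.msum_r[OF N DC(1)] by auto
  have Xe: "\<X> = qimg M N S1" unfolding x(2) A.qimg_cyc[OF N x(1)] S1_def K_def
    using A.qimg_msum[OF N A.sub_c[OF A.cyc_sub[OF x(1)]]] by simp
  have sumQ: "msum (quot M N) \<X> E = qimg M N (msum M S1 S2)"
    unfolding Xe E_def using A.msum_qimg[OF N A.sub_c[OF S1s(1)] A.sub_c[OF S2s(1)]] .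
  have S12c: "msum M S2 S1 = msum M S1 S2" using A.msum_comm A.sub_c S1s(1) S2s(1) by blast
  have P1: "small (quot (quot M N) (qimg M N S1))
           (qimg (quot M N) (qimg M N S1) (qimg M N (msum M S1 S2)))"
  proof (rule main_part[OF assms(1) N S1s(1,2) S2s(1,2)])
    fix T assume T: "submodule M T" "N \<subseteq> T" "S1 \<subseteq> T" "msum M (msum M S1 S2) T = carrier M"
    have "carrier M \<subseteq> msum M (msum M K D) T"
      using A.rearr[OF N KC DC(1) T(1,2)] T(4) unfolding S1_def S2_def by simp
    hence "msum M (msum M K D) T = carrier M"
      using A.sub_c[OF A.msum_sub[OF KD(1) T(1)]] by auto
    thus "T = carrier M" using H1 T S1s(3) by blast
  qed
  have P2: "small (quot (quot M N) (qimg M N S2))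
           (qimg (quot M N) (qimg M N S2) (qimg M N (msum M S2 S1)))"
  proof (rule main_part[OF assms(1) N S2s(1,2) S1s(1,2)])
    fix T assume T: "submodule M T" "N \<subseteq> T" "S2 \<subseteq> T" "msum M (msum M S2 S1) T = carrier M"
    have "carrier M \<subseteq> msum M (msum M D K) T"
      using A.rearr[OF N DC(1) KC T(1,2)] T(4) unfolding S1_def S2_def by simp
    hence "msum M (msum M D K) T = carrier M"
      using A.sub_c[OF A.msum_sub[OF DK(1) T(1)]] by auto
    thus "T = carrier M" using H2 T S2s(3) by blast
  qed
  have "beta_star (quot M N) \<X> E"
    unfolding beta_star_def sumQ using P1 P2 S12c unfolding Xe E_def by simp
  thus "\<exists>D. direct_summand (quot M N) D \<and> beta_star (quot M N) \<X> D" using E by blast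
qed

end
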